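(* Let $\{X_k\}_{k=0}^{N-1}$ be square random matrices and $\{y_k\}_{k=0}^{N-1}$ random vectors of compatible dimension, both with bounded second moments, and let $\{F_k\}_{k=0}^{N-1}$ be deterministic matrices of compatible dimensions. Suppose that $(X_k,y_k)$ may be dependent, but $X_k$ and $X_l$ are independent for $k\neq l$. Then $$\mathbb E\Big[\Big\|\sum_{k=0}^{N-1}F_kX_ky_k\Big\|^2\Big]\le\sum_{k=0}^{N-1}\|F_k\|^2\sqrt{\mathbb E[\|X_k\|^4]}\;\sqrt{\mathbb E\Big[\Big(\sum_{k=0}^{N-1}\|y_k\|^2\Big)^2\Big]}.$$
   Context: $\|\cdot\|$ denotes the Euclidean norm for vectors and the spectral norm for matrices. *)

theory Defs
  imports "HOL-Probability.Probability"
begin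

text \<open>Spectral (operator) norm of a matrix, w.r.t. Euclidean norms.
  Note: the library's norm on real^'n^'m is the Frobenius norm, hence this definition.\<close>
definition specnorm :: "real^'n^'m \<Rightarrow> real" where
  "specnorm A = onorm (\<lambda>x. A *v x)"

definition esqrt :: "ennreal \<Rightarrow> ennreal" where
  "esqrt x = (if x = \<infinity> then \<infinity> else ennreal (sqrt (enn2real x)))"

end

theory Submission
  imports Defs
begin

lemma specnorm_mv: "norm (A *v x) \<le> specnorm A * norm x"
  unfolding specnorm_def by (rule onorm) simp

lemma specnorm_nonneg: "0 \<le> specnorm A"
  unfolding specnorm_def by (rule onorm_pos_le) simp

lemma specnorm_le_frob: "specnorm (A::real^'n^'m) \<le> real CARD('m) * real CARD('n) * norm A"
  unfolding specnorm_def
proof (rule onorm_le_matrix_component)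
  fix i j
  have "\<bar>A $ i $ j\<bar> \<le> norm (A $ i)" by (rule component_le_norm_cart)
  also have "\<dots> \<le> norm A" by (rule Finite_Cartesian_Product.norm_nth_le)
  finally show "\<bar>A $ i $ j\<bar> \<le> norm A" .
qed

lemma specnorm_triangle: "specnorm (A::real^'n^'m) \<le> specnorm B + specnorm (A - B)"
  unfolding specnorm_def
proof -
  have "onorm ((*v) A) = onorm (\<lambda>x. B *v x + (A - B) *v x)"
    by (simp add: matrix_vector_mult_diff_rdistrib)
  also have "\<dots> \<le> onorm ((*v) B) + onorm ((*v) (A - B))"
    by (rule onorm_triangle) simp_all
  finally show "onorm ((*v) A) \<le> onorm ((*v) B) + onorm ((*v) (A - B))" .
qed

lemma specnorm_cont: "continuous_on UNIV (specnorm :: real^'n^'m \<Rightarrow> real)"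
proof (rule lipschitz_on_continuous_on)
  show "(real CARD('m) * real CARD('n))-lipschitz_on UNIV (specnorm :: real^'n^'m \<Rightarrow> real)"
  proof (rule lipschitz_onI)
    fix A B :: "real^'n^'m"
    have 1: "specnorm A \<le> specnorm B + specnorm (A - B)" by (rule specnorm_triangle)
    have 2: "specnorm B \<le> specnorm A + specnorm (B - A)" by (rule specnorm_triangle)
    have 3: "specnorm (A - B) \<le> real CARD('m) * real CARD('n) * norm (A - B)" by (rule specnorm_le_frob)
    have 4: "specnorm (B - A) \<le> real CARD('m) * real CARD('n) * norm (A - B)"
      using specnorm_le_frob[of "B - A"] by (simp add: norm_minus_commute)
    show "dist (specnorm A) (specnorm B) \<le> real CARD('m) * real CARD('n) * dist A B"
      using 1 2 3 4 by (simp add: dist_real_def dist_norm)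
  qed simp
qed

lemma specnorm_measurable[measurable]: "specnorm \<in> borel_measurable (borel :: (real^'n^'m) measure)"
  by (rule borel_measurable_continuous_onI[OF specnorm_cont])

lemma esqrt_top: "esqrt \<infinity> = \<infinity>" by (simp add: esqrt_def)

lemma esqrt_pos: "C \<noteq> 0 \<Longrightarrow> esqrt C > 0"
proof (cases "C = \<infinity>")
  case False
  assume "C \<noteq> 0"
  then have "enn2real C \<noteq> 0" using False by (simp add: enn2real_eq_0_iff)
  then have "enn2real C > 0" using enn2real_nonneg[of C] by linarith
  then show ?thesis using False by (simp add: esqrt_def)
qed (simp add: esqrt_def)

lemma esqrt_bound:
  fixes x A B :: ennreal
  assumes "x^2 \<le> A * B"
  shows "x \<le> esqrt A * esqrt B"
proof (cases "A = \<infinity> \<or> B = \<infinity>")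
  case True
  show ?thesis
  proof (cases "A = 0 \<or> B = 0")
    case True
    then have "x^2 = 0" using assms by auto
    then show ?thesis by simp
  next
    case False
    have "esqrt A > 0" "esqrt B > 0" using False esqrt_pos by auto
    then have "esqrt A * esqrt B = \<infinity>" using \<open>A = \<infinity> \<or> B = \<infinity>\<close> esqrt_top
      by (auto simp: ennreal_mult_eq_top_iff)
    then show ?thesis by simp
  qed
next
  case False
  then obtain a b where a: "A = ennreal a" "a \<ge> 0" and b: "B = ennreal b" "b \<ge> 0"
    by (metis ennreal_cases infinity_ennreal_def)
  have ab: "A * B = ennreal (a * b)" using a b by (simp add: ennreal_mult)
  obtain t where t: "x = ennreal t" "t \<ge> 0"
  proof (cases x rule: ennreal_cases)
    case (real r)
    then show ?thesis using that by blast
  next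
    case top
    then have "x^2 = top" by simp
    then show ?thesis using assms ab by (simp add: top_unique)
  qed
  have "ennreal (t^2) \<le> ennreal (a * b)" using assms ab t by (simp add: ennreal_power)
  then have "t^2 \<le> a * b" using a b by (simp add: ennreal_le_iff)
  then have "t \<le> sqrt (a * b)" using t by (simp add: real_le_rsqrt)
  then have "t \<le> sqrt a * sqrt b" by (simp add: real_sqrt_mult)
  then have "ennreal t \<le> ennreal (sqrt a * sqrt b)" by (rule ennreal_leI)
  also have "\<dots> = esqrt A * esqrt B" using a b
    by (simp add: esqrt_def ennreal_mult)
  finally show ?thesis using t by simp
qed

lemma CS_esqrt:
  assumes "f \<in> borel_measurable M" "g \<in> borel_measurable M"
  shows "(\<integral>\<^sup>+x. f x * g x \<partial>M) \<le> esqrt (\<integral>\<^sup>+x. f x ^ 2 \<partial>M) * esqrt (\<integral>\<^sup>+x. g x ^ 2 \<partial>M)"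
  by (rule esqrt_bound[OF Cauchy_Schwarz_nn_integral[OF assms]])

lemma pointwise_bound:
  fixes X :: "nat \<Rightarrow> real^'n^'n" and y :: "nat \<Rightarrow> real^'n" and F :: "nat \<Rightarrow> real^'n^'m"
  shows "(norm (\<Sum>k<N. F k *v (X k *v y k)))^2
     \<le> (\<Sum>k<N. (specnorm (F k))^2 * (specnorm (X k))^2) * (\<Sum>k<N. (norm (y k))^2)"
proof -
  have "norm (\<Sum>k<N. F k *v (X k *v y k)) \<le> (\<Sum>k<N. norm (F k *v (X k *v y k)))"
    by (rule norm_sum)
  also have "\<dots> \<le> (\<Sum>k<N. (specnorm (F k) * specnorm (X k)) * norm (y k))"
  proof (rule sum_mono)
    fix k
    have "norm (F k *v (X k *v y k)) \<le> specnorm (F k) * norm (X k *v y k)" by (rule specnorm_mv)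
    also have "\<dots> \<le> specnorm (F k) * (specnorm (X k) * norm (y k))"
      by (rule mult_left_mono[OF specnorm_mv specnorm_nonneg])
    finally show "norm (F k *v (X k *v y k)) \<le> (specnorm (F k) * specnorm (X k)) * norm (y k)"
      by (simp add: mult.assoc)
  qed
  finally have 1: "norm (\<Sum>k<N. F k *v (X k *v y k)) \<le> (\<Sum>k<N. (specnorm (F k) * specnorm (X k)) * norm (y k))" .
  have "(norm (\<Sum>k<N. F k *v (X k *v y k)))^2 \<le> (\<Sum>k<N. (specnorm (F k) * specnorm (X k)) * norm (y k))^2"
    by (rule power_mono[OF 1 norm_ge_zero])
  also have "\<dots> \<le> (\<Sum>k<N. (specnorm (F k) * specnorm (X k))^2) * (\<Sum>k<N. (norm (y k))^2)"
    by (rule Cauchy_Schwarz_ineq_sum)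
  finally show ?thesis by (simp add: power_mult_distrib)
qed

theorem lemma4:
  fixes M :: "'a measure" and N :: nat
    and X :: "nat \<Rightarrow> 'a \<Rightarrow> real^'n^'n"
    and y :: "nat \<Rightarrow> 'a \<Rightarrow> real^'n"
    and F :: "nat \<Rightarrow> real^'n^'m"
  assumes "prob_space M"
    and "\<And>k. k < N \<Longrightarrow> X k \<in> borel_measurable M"
    and "\<And>k. k < N \<Longrightarrow> y k \<in> borel_measurable M"
    and "\<And>k. k < N \<Longrightarrow> integrable M (\<lambda>\<omega>. (specnorm (X k \<omega>))^2)"
    and "\<And>k. k < N \<Longrightarrow> integrable M (\<lambda>\<omega>. (norm (y k \<omega>))^2)"
    and "prob_space.indep_vars M (\<lambda>_. borel) X {..<N}"
  shows "(\<integral>\<^sup>+\<omega>. ennreal ((norm (\<Sum>k<N. F k *v (X k \<omega> *v y k \<omega>)))^2) \<partial>M)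
    \<le> (\<Sum>k<N. ennreal ((specnorm (F k))^2) *
                esqrt (\<integral>\<^sup>+\<omega>. ennreal ((specnorm (X k \<omega>))^4) \<partial>M))
       * esqrt (\<integral>\<^sup>+\<omega>. ennreal ((\<Sum>k<N. (norm (y k \<omega>))^2)^2) \<partial>M)"
proof -
  define S where "S = (\<lambda>\<omega>. \<Sum>k<N. (norm (y k \<omega>))^2)"
  define sX where "sX = (\<lambda>k \<omega>. specnorm (X k \<omega>))"
  have S_nn: "0 \<le> S \<omega>" for \<omega> unfolding S_def by (intro sum_nonneg) simp
  have ym: "(\<lambda>\<omega>. norm (y k \<omega>)) \<in> borel_measurable M" if "k < N" for k
    using measurable_compose[OF assms(3)[OF that] borel_measurable_norm] by simp
  have Sm: "S \<in> borel_measurable M" unfolding S_def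
    by (intro borel_measurable_sum borel_measurable_power ym) simp
  have Xm: "sX k \<in> borel_measurable M" if "k < N" for k
    unfolding sX_def using measurable_compose[OF assms(2)[OF that] specnorm_measurable] by (simp add: o_def)
  have "(\<integral>\<^sup>+\<omega>. ennreal ((norm (\<Sum>k<N. F k *v (X k \<omega> *v y k \<omega>)))^2) \<partial>M)
      \<le> (\<integral>\<^sup>+\<omega>. (\<Sum>k<N. ennreal ((specnorm (F k))^2) * (ennreal ((sX k \<omega>)^2) * ennreal (S \<omega>))) \<partial>M)"
  proof (rule nn_integral_mono)
    fix \<omega>
    have "ennreal ((norm (\<Sum>k<N. F k *v (X k \<omega> *v y k \<omega>)))^2)
        \<le> ennreal ((\<Sum>k<N. (specnorm (F k))^2 * (sX k \<omega>)^2) * S \<omega>)"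
      unfolding S_def sX_def by (rule ennreal_leI[OF pointwise_bound])
    also have "\<dots> = (\<Sum>k<N. ennreal ((specnorm (F k))^2) * (ennreal ((sX k \<omega>)^2) * ennreal (S \<omega>)))"
    proof -
      have "(\<Sum>k<N. ennreal ((specnorm (F k))^2) * (ennreal ((sX k \<omega>)^2) * ennreal (S \<omega>)))
          = (\<Sum>k<N. ennreal ((specnorm (F k))^2 * ((sX k \<omega>)^2 * S \<omega>)))"
        using S_nn[of \<omega>] by (simp add: ennreal_mult)
      also have "\<dots> = ennreal (\<Sum>k<N. (specnorm (F k))^2 * ((sX k \<omega>)^2 * S \<omega>))"
        using S_nn[of \<omega>] by (intro sum_ennreal) simp
      finally show ?thesis using S_nn[of \<omega>] by (simp add: sum_distrib_right mult.assoc)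
    qed
    finally show "ennreal ((norm (\<Sum>k<N. F k *v (X k \<omega> *v y k \<omega>)))^2)
        \<le> (\<Sum>k<N. ennreal ((specnorm (F k))^2) * (ennreal ((sX k \<omega>)^2) * ennreal (S \<omega>)))" .
  qed
  also have "\<dots> = (\<Sum>k<N. ennreal ((specnorm (F k))^2) * (\<integral>\<^sup>+\<omega>. ennreal ((sX k \<omega>)^2) * ennreal (S \<omega>) \<partial>M))"
  proof -
    have pm: "(\<lambda>\<omega>. ennreal ((sX k \<omega>)^2) * ennreal (S \<omega>)) \<in> borel_measurable M" if "k < N" for k
    proof -
      note [measurable] = Xm[OF that] Sm
      show ?thesis by measurable
    qed
    have pm2: "(\<lambda>\<omega>. ennreal ((specnorm (F k))^2) * (ennreal ((sX k \<omega>)^2) * ennreal (S \<omega>))) \<in> borel_measurable M" if "k < N" for k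
    proof -
      note [measurable] = Xm[OF that] Sm
      show ?thesis by measurable
    qed
    show ?thesis
      by (subst nn_integral_sum) (auto intro!: sum.cong nn_integral_cmult pm pm2)
  qed
  also have "\<dots> \<le> (\<Sum>k<N. ennreal ((specnorm (F k))^2) *
        (esqrt (\<integral>\<^sup>+\<omega>. ennreal ((specnorm (X k \<omega>))^4) \<partial>M) * esqrt (\<integral>\<^sup>+\<omega>. ennreal ((S \<omega>)^2) \<partial>M)))"
  proof (rule sum_mono, rule mult_left_mono)
    fix k assume "k \<in> {..<N}"
    then have k: "k < N" by simp
    have "(\<integral>\<^sup>+\<omega>. ennreal ((sX k \<omega>)^2) * ennreal (S \<omega>) \<partial>M)
      \<le> esqrt (\<integral>\<^sup>+\<omega>. (ennreal ((sX k \<omega>)^2))^2 \<partial>M) * esqrt (\<integral>\<^sup>+\<omega>. (ennreal (S \<omega>))^2 \<partial>M)"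
    proof (rule CS_esqrt)
      note [measurable] = Xm[OF k] Sm
      show "(\<lambda>\<omega>. ennreal ((sX k \<omega>)^2)) \<in> borel_measurable M" by measurable
      show "(\<lambda>\<omega>. ennreal (S \<omega>)) \<in> borel_measurable M" by measurable
    qed
    also have "\<dots> = esqrt (\<integral>\<^sup>+\<omega>. ennreal ((specnorm (X k \<omega>))^4) \<partial>M) * esqrt (\<integral>\<^sup>+\<omega>. ennreal ((S \<omega>)^2) \<partial>M)"
    proof -
      have e1: "(ennreal ((sX k \<omega>)^2))^2 = ennreal ((specnorm (X k \<omega>))^4)" for \<omega>
        by (simp add: ennreal_power sX_def flip: power_mult)
      have e2: "(ennreal (S \<omega>))^2 = ennreal ((S \<omega>)^2)" for \<omega>
        using S_nn[of \<omega>] by (simp add: ennreal_power)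
      show ?thesis by (simp only: e1 e2)
    qed
    finally show "(\<integral>\<^sup>+\<omega>. ennreal ((sX k \<omega>)^2) * ennreal (S \<omega>) \<partial>M)
      \<le> esqrt (\<integral>\<^sup>+\<omega>. ennreal ((specnorm (X k \<omega>))^4) \<partial>M) * esqrt (\<integral>\<^sup>+\<omega>. ennreal ((S \<omega>)^2) \<partial>M)" .
  qed simp
  also have "\<dots> = (\<Sum>k<N. ennreal ((specnorm (F k))^2) *
                esqrt (\<integral>\<^sup>+\<omega>. ennreal ((specnorm (X k \<omega>))^4) \<partial>M))
       * esqrt (\<integral>\<^sup>+\<omega>. ennreal ((S \<omega>)^2) \<partial>M)"
    by (simp add: sum_distrib_right mult.assoc)
  finally show ?thesis unfolding S_def .
qed

end
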